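(* Consider a sequence of probability distributions $\{Q^k(x,E,\theta):E\in\mathcal{E},x\in\mathcal{X}_E,\theta\in\{\theta_0,\theta_1\}\}_{k\ge1}$ satisfying the low-informativeness condition; in particular $Q^k(x,E,\theta)\to\mathcal{Q}(x,E)$ for $\theta=\theta_0,\theta_1$. For each $k$, let $\mathcal{Q}^k(\cdot,E)$ be the corresponding solution of $$\min_{\mathcal{Q}'\ge0}\ \max_{\theta\in\{\theta_0,\theta_1\}}\ \max_{x\in\mathcal{X}_E}\Big|\frac{Q^k(x,E,\theta)}{\mathcal{Q}'(x,E)}-1\Big|\quad\text{subject to}\quad\sum_{x\in\mathcal{X}_E}\mathcal{Q}'(x,E)=1$$ for every $E\in\mathcal{E}$. Then $\mathcal{Q}^k(x,E)\to\mathcal{Q}(x,E)$ as $k\to\infty$ for all $E\in\mathcal{E}$ and $x\in\mathcal{X}_E$.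
   Context: $\mathcal{E}$ is a finite set of experiments, each $E$ with a finite outcome set $\mathcal{X}_E$. For each $k$, $Q^k(\cdot,E,\theta)$ is a probability distribution on $\mathcal{X}_E$ (outcome probabilities under $\Theta=\theta$). Low-informativeness condition: for each $E\in\mathcal{E}$ there is a probability distribution $\mathcal{Q}(\cdot,E)$ on $\mathcal{X}_E$ such that, for $\theta\in\{\theta_0,\theta_1\}$, $\sqrt{k}\big(Q^k(x,E,\theta)/\mathcal{Q}(x,E)-1\big)\to\alpha(x,E,\theta)$ with $\sum_x\alpha(x,E,\theta)\mathcal{Q}(x,E)=0$. *)

theory Defs
  imports "HOL-Analysis.Analysis"
begin

text \<open>Deviation |q/q' - 1| of a ratio, valued in the extended reals:
  it is +infinity when q' = 0 and q is nonzero; for q = q' = 0 the convention 0/0 = 0 gives 1.\<close>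
definition ratio_dev :: "real \<Rightarrow> real \<Rightarrow> ereal" where
  "ratio_dev q q' = (if q' = 0 \<and> q \<noteq> 0 then \<infinity> else ereal \<bar>q / q' - 1\<bar>)"

definition minmax_obj ::
  "('x \<Rightarrow> 'e \<Rightarrow> 'th \<Rightarrow> real) \<Rightarrow> 'th \<Rightarrow> 'th \<Rightarrow> 'x set \<Rightarrow> 'e \<Rightarrow> ('x \<Rightarrow> real) \<Rightarrow> ereal" where
  "minmax_obj Q th0 th1 XE E q' =
     (SUP th\<in>{th0, th1}. SUP x\<in>XE. ratio_dev (Q x E th) (q' x))"

definition is_prob_on :: "'x set \<Rightarrow> ('x \<Rightarrow> real) \<Rightarrow> bool" where
  "is_prob_on A p \<longleftrightarrow> (\<forall>x\<in>A. p x \<ge> 0) \<and> sum p A = 1"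

definition is_minmax_solution ::
  "('x \<Rightarrow> 'e \<Rightarrow> 'th \<Rightarrow> real) \<Rightarrow> 'th \<Rightarrow> 'th \<Rightarrow> 'x set \<Rightarrow> 'e \<Rightarrow> ('x \<Rightarrow> real) \<Rightarrow> bool" where
  "is_minmax_solution Q th0 th1 XE E q' \<longleftrightarrow>
     is_prob_on XE q' \<and>
     (\<forall>q''. is_prob_on XE q'' \<longrightarrow> minmax_obj Q th0 th1 XE E q' \<le> minmax_obj Q th0 th1 XE E q'')"

end

theory Submission
  imports Defs "HOL-Real_Asymp.Real_Asymp"
begin

lemma ratio_dev_ge: "ereal \<bar>q / q' - 1\<bar> \<le> ratio_dev q q'"
  by (simp add: ratio_dev_def)

lemma inv_sqrt_lim: "(\<lambda>k. inverse (sqrt (real k))) \<longlonglongrightarrow> 0"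
  by real_asymp

lemma a_lim:
  assumes "(\<lambda>k. sqrt (real k) * a k) \<longlonglongrightarrow> (c::real)"
  shows "a \<longlonglongrightarrow> 0"
proof -
  have "(\<lambda>k. inverse (sqrt (real k)) * (sqrt (real k) * a k)) \<longlonglongrightarrow> 0 * c"
    by (intro tendsto_mult inv_sqrt_lim assms)
  moreover have "eventually (\<lambda>k. inverse (sqrt (real k)) * (sqrt (real k) * a k) = a k) sequentially"
    using eventually_gt_at_top[of 0] by eventually_elim simp
  ultimately show ?thesis using Lim_transform_eventually by fastforce
qed

theorem proposition8:
  fixes Exps :: "'e set" and X :: "'e \<Rightarrow> 'x set"
    and Q :: "nat \<Rightarrow> 'x \<Rightarrow> 'e \<Rightarrow> 'th \<Rightarrow> real"
    and Qlim :: "'x \<Rightarrow> 'e \<Rightarrow> real"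
    and Qsol :: "nat \<Rightarrow> 'x \<Rightarrow> 'e \<Rightarrow> real"
    and th0 th1 :: 'th
  assumes finE: "finite Exps"
    and finX: "\<And>E. E \<in> Exps \<Longrightarrow> finite (X E)"
    and probQ: "\<And>k E th. E \<in> Exps \<Longrightarrow> th \<in> {th0, th1} \<Longrightarrow> is_prob_on (X E) (\<lambda>x. Q k x E th)"
    and probQlim: "\<And>E. E \<in> Exps \<Longrightarrow> is_prob_on (X E) (\<lambda>x. Qlim x E)"
    and lowinf: "\<exists>\<alpha> :: 'x \<Rightarrow> 'e \<Rightarrow> 'th \<Rightarrow> real.
       (\<forall>E\<in>Exps. \<forall>th\<in>{th0, th1}. \<forall>x\<in>X E.
          (\<lambda>k. sqrt (real k) * (Q k x E th / Qlim x E - 1)) \<longlonglongrightarrow> \<alpha> x E th) \<and>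
       (\<forall>E\<in>Exps. \<forall>th\<in>{th0, th1}. (\<Sum>x\<in>X E. \<alpha> x E th * Qlim x E) = 0)"
    and sol: "\<And>k E. E \<in> Exps \<Longrightarrow> is_minmax_solution (Q k) th0 th1 (X E) E (\<lambda>x. Qsol k x E)"
  shows "\<forall>E\<in>Exps. \<forall>x\<in>X E. (\<lambda>k. Qsol k x E) \<longlonglongrightarrow> Qlim x E"
proof (intro ballI)
  fix E x assume E: "E \<in> Exps" and x: "x \<in> X E"
  obtain \<alpha> where al: "\<And>th x. th \<in> {th0, th1} \<Longrightarrow> x \<in> X E \<Longrightarrow>
      (\<lambda>k. sqrt (real k) * (Q k x E th / Qlim x E - 1)) \<longlonglongrightarrow> \<alpha> x E th"
    using lowinf E by blast
  have a0: "(\<lambda>k. Q k y E th / Qlim y E - 1) \<longlonglongrightarrow> 0" if "th \<in> {th0, th1}" "y \<in> X E" for th y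
    using a_lim[OF al[OF that]] .
  have nz: "Qlim y E \<noteq> 0" if "y \<in> X E" for y
  proof
    assume "Qlim y E = 0"
    then have "(\<lambda>k. -1::real) \<longlonglongrightarrow> 0" using a0[of th0 y] that by simp
    then show False using LIMSEQ_unique[OF tendsto_const] by fastforce
  qed
  have Qconv: "(\<lambda>k. Q k x E th0) \<longlonglongrightarrow> Qlim x E"
  proof -
    have "(\<lambda>k. Qlim x E * ((Q k x E th0 / Qlim x E - 1) + 1)) \<longlonglongrightarrow> Qlim x E * (0 + 1)"
      by (intro tendsto_intros a0) (use x in auto)
    then show ?thesis using nz[OF x] by simp
  qed
  define \<delta> where "\<delta> k = (\<Sum>th\<in>{th0, th1}. \<Sum>y\<in>X E. \<bar>Q k y E th / Qlim y E - 1\<bar>)" for k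
  have \<delta>0: "\<delta> \<longlonglongrightarrow> 0"
  proof -
    have "\<delta> \<longlonglongrightarrow> (\<Sum>th\<in>{th0, th1}. \<Sum>y\<in>X E. \<bar>0::real\<bar>)"
      unfolding \<delta>_def by (intro tendsto_sum tendsto_rabs a0) auto
    then show ?thesis by simp
  qed
  have bound: "\<bar>Q k x E th0 / Qsol k x E - 1\<bar> \<le> \<delta> k" for k
  proof -
    have "ereal \<bar>Q k x E th0 / Qsol k x E - 1\<bar> \<le> ratio_dev (Q k x E th0) (Qsol k x E)"
      by (rule ratio_dev_ge)
    also have "\<dots> \<le> minmax_obj (Q k) th0 th1 (X E) E (\<lambda>x. Qsol k x E)"
      unfolding minmax_obj_def
      by (rule SUP_upper2[of th0]) (auto intro: SUP_upper x)
    also have "\<dots> \<le> minmax_obj (Q k) th0 th1 (X E) E (\<lambda>x. Qlim x E)"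
      using sol[OF E, of k] probQlim[OF E] unfolding is_minmax_solution_def by blast
    also have "\<dots> \<le> ereal (\<delta> k)"
      unfolding minmax_obj_def
    proof (intro SUP_least)
      fix th y assume th: "th \<in> {th0, th1}" and y: "y \<in> X E"
      have "\<bar>Q k y E th / Qlim y E - 1\<bar> \<le> (\<Sum>y\<in>X E. \<bar>Q k y E th / Qlim y E - 1\<bar>)"
        by (rule member_le_sum) (use y finX[OF E] in auto)
      also have "\<dots> \<le> \<delta> k" unfolding \<delta>_def
        by (rule member_le_sum[where f="\<lambda>th. \<Sum>y\<in>X E. \<bar>Q k y E th / Qlim y E - 1\<bar>"])
           (use th in \<open>auto intro: sum_nonneg\<close>)
      finally show "ratio_dev (Q k y E th) (Qlim y E) \<le> ereal (\<delta> k)"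
        using nz[OF y] by (simp add: ratio_dev_def)
    qed
    finally show ?thesis by simp
  qed
  have r1: "(\<lambda>k. Q k x E th0 / Qsol k x E) \<longlonglongrightarrow> 1"
  proof -
    have "(\<lambda>k. Q k x E th0 / Qsol k x E - 1) \<longlonglongrightarrow> 0"
      by (rule Lim_null_comparison[of _ \<delta>]) (use bound \<delta>0 in auto)
    then show ?thesis by (simp add: LIM_zero_iff)
  qed
  have "(\<lambda>k. Q k x E th0 / (Q k x E th0 / Qsol k x E)) \<longlonglongrightarrow> Qlim x E / 1"
    by (intro tendsto_divide Qconv r1) auto
  moreover have "eventually (\<lambda>k. Q k x E th0 / Qsol k x E \<noteq> 0) sequentially"
    using r1 by (rule tendsto_imp_eventually_ne) simp
  then have "eventually (\<lambda>k. Q k x E th0 / (Q k x E th0 / Qsol k x E) = Qsol k x E) sequentially"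
    by eventually_elim auto
  ultimately show "(\<lambda>k. Qsol k x E) \<longlonglongrightarrow> Qlim x E"
    using Lim_transform_eventually by fastforce
qed

end
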